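(* Let $f_0\in\mathbb{R}$, $g\in\mathbb{R}^n$, $H$ a symmetric $n\times n$ matrix, $\sigma>0$, and $m(s)=f_0+\langle g,s\rangle+\frac12\langle Hs,s\rangle+\frac16\sigma\|s\|^3$. Let $s_k\in\mathbb{R}^n$ with $m(s_k)\le m(0)$, set $g_k=g+Hs_k$, and assume $\|g_k\|_{r,1}\ge\frac12\sigma\|s_k\|^2$. Let $d_k$ be a minimizer of $\langle g_k,v\rangle$ over $\{v:\|v\|=1\}$, let $\alpha_k^C$ be a minimizer of $\alpha\mapsto m(s_k+\alpha d_k)$ over $\alpha\ge0$, and $s_k^C=s_k+\alpha_k^Cd_k$. Then $$m(s_k)-m(s_k^C)\ge\frac12\min\left[\frac{\big|\|g_k\|_{r,1}-\frac12\sigma\|s_k\|^2\big|^2}{1+\frac32(\|H\|_{r,2}+\sigma\|s_k\|)},\ \frac{\big|\|g_k\|_{r,1}-\frac12\sigma\|s_k\|^2\big|^{3/2}}{3\sqrt\sigma}\right].$$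
   Context: $\|\cdot\|$ is an arbitrary (possibly non-smooth) norm on $\mathbb{R}^n$, $\langle\cdot,\cdot\rangle$ the Euclidean inner product, $\|v\|_{r,1}=\max_{\|s\|=1}|\langle v,s\rangle|$ the dual norm, and for a symmetric matrix $H$, $\|H\|_{r,2}=\max_{\|v\|=1}|\langle Hv,v\rangle|$. *)

theory Defs
  imports "HOL-Analysis.Analysis"
begin

definition is_norm :: "(real^'n \<Rightarrow> real) \<Rightarrow> bool" where
  "is_norm N \<longleftrightarrow>
     (\<forall>x. 0 \<le> N x) \<and> (\<forall>x. N x = 0 \<longleftrightarrow> x = 0) \<and>
     (\<forall>c x. N (c *\<^sub>R x) = \<bar>c\<bar> * N x) \<and>
     (\<forall>x y. N (x + y) \<le> N x + N y)"

definition dual_norm :: "(real^'n \<Rightarrow> real) \<Rightarrow> real^'n \<Rightarrow> real" where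
  "dual_norm N v = Sup {\<bar>v \<bullet> s\<bar> | s. N s = 1}"

definition mat_norm2 :: "(real^'n \<Rightarrow> real) \<Rightarrow> real^'n^'n \<Rightarrow> real" where
  "mat_norm2 N H = Sup {\<bar>(H *v v) \<bullet> v\<bar> | v. N v = 1}"

definition cubic_model ::
  "(real^'n \<Rightarrow> real) \<Rightarrow> real \<Rightarrow> real^'n \<Rightarrow> real^'n^'n \<Rightarrow> real \<Rightarrow> real^'n \<Rightarrow> real" where
  "cubic_model N f0 g H \<sigma> s = f0 + g \<bullet> s + (1/2) * ((H *v s) \<bullet> s) + (1/6) * \<sigma> * (N s) ^ 3"

end

theory Submission
  imports Defs
begin

lemma norm_sum_le:
  assumes "is_norm N" "finite S"
  shows "N (sum f S) \<le> (\<Sum>i\<in>S. N (f i))"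
  using assms(2)
proof (induction S rule: finite_induct)
  case empty
  have "N 0 = 0" using assms(1) unfolding is_norm_def by blast
  then show ?case by simp
next
  case (insert x F)
  have "N (f x + sum f F) \<le> N (f x) + N (sum f F)" using assms(1) unfolding is_norm_def by blast
  then show ?case using insert by simp
qed

lemma norm_upper:
  fixes N :: "real^'n \<Rightarrow> real"
  assumes "is_norm N"
  shows "\<exists>C. \<forall>x. N x \<le> C * norm x"
proof -
  have nn: "\<forall>x. 0 \<le> N x" and hom: "\<forall>c x. N (c *\<^sub>R x) = \<bar>c\<bar> * N x"
    using assms unfolding is_norm_def by blast+
  have "N x \<le> (\<Sum>b\<in>Basis. N b) * norm x" for x
  proof -
    have "N x = N (\<Sum>b\<in>Basis. inner x b *\<^sub>R b)" by (simp add: euclidean_representation)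
    also have "\<dots> \<le> (\<Sum>b\<in>Basis. N (inner x b *\<^sub>R b))" by (rule norm_sum_le[OF assms]) simp
    also have "\<dots> = (\<Sum>b\<in>Basis. \<bar>inner x b\<bar> * N b)" using hom by simp
    also have "\<dots> \<le> (\<Sum>b\<in>Basis. norm x * N b)"
      by (rule sum_mono) (simp add: Basis_le_norm mult_right_mono nn)
    finally show ?thesis by (simp add: sum_distrib_left mult.commute)
  qed
  then show ?thesis by blast
qed

lemma norm_lower:
  fixes N :: "real^'n \<Rightarrow> real"
  assumes "is_norm N"
  shows "\<exists>c>0. \<forall>x. c * norm x \<le> N x"
proof -
  have nn: "\<forall>x. 0 \<le> N x" and z: "\<forall>x. N x = 0 \<longleftrightarrow> x = 0" and hom: "\<forall>c x. N (c *\<^sub>R x) = \<bar>c\<bar> * N x"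
    and tri: "\<forall>x y. N (x + y) \<le> N x + N y"
    using assms unfolding is_norm_def by blast+
  obtain C where C: "\<forall>x. N x \<le> C * norm x" using norm_upper[OF assms] by blast
  have lip: "\<bar>N x - N y\<bar> \<le> C * norm (x - y)" for x y
  proof -
    have "N x \<le> N (x - y) + N y" using tri[rule_format, of "x - y" y] by simp
    moreover have "N y \<le> N (y - x) + N x" using tri[rule_format, of "y - x" x] by simp
    moreover have "N (y - x) = N (x - y)" using hom[rule_format, of "-1" "x - y"] by simp
    ultimately have "\<bar>N x - N y\<bar> \<le> N (x - y)" by linarith
    then show ?thesis using C by (meson order_trans)
  qed
  have cont: "continuous_on (sphere 0 1) N"
  proof (rule continuous_at_imp_continuous_on, intro ballI)
    fix x :: "real^'n"
    show "isCont N x"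
    proof (rule continuous_at_eps_delta[THEN iffD2], intro allI impI)
      fix e :: real assume e: "e > 0"
      have "N (axis undefined 1) \<le> C" using C[rule_format, of "axis undefined (1::real)"] by (simp add: norm_axis_1)
      then have Cnn: "C \<ge> 0" using nn by (meson order.trans)
      show "\<exists>d>0. \<forall>x'. dist x' x < d \<longrightarrow> dist (N x') (N x) < e"
      proof (intro exI[of _ "e / (C + 1)"] conjI allI impI)
        show "e / (C + 1) > 0" using e Cnn by simp
        fix x' assume "dist x' x < e / (C + 1)"
        then have "(C+1) * norm (x' - x) < e" using Cnn by (simp add: dist_norm field_simps)
        moreover have "\<bar>N x' - N x\<bar> \<le> (C+1) * norm (x' - x)"
          using lip[of x' x] norm_ge_zero[of "x' - x"] unfolding distrib_right by linarith
        ultimately show "dist (N x') (N x) < e" by (simp add: dist_real_def)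
      qed
    qed
  qed
  have ne: "sphere (0::real^'n) 1 \<noteq> {}"
    using norm_axis_1[of "undefined::'n"] by (metis mem_sphere_0 empty_iff)
  obtain x0 where x0: "x0 \<in> sphere 0 1" and mn: "\<forall>y\<in>sphere 0 1. N x0 \<le> N y"
    using continuous_attains_inf[OF compact_sphere ne cont] by blast
  have "x0 \<noteq> 0" using x0 by auto
  then have pos: "N x0 > 0" using nn z by (metis less_eq_real_def)
  have "N x0 * norm x \<le> N x" for x
  proof (cases "x = 0")
    case True then show ?thesis using nn by simp
  next
    case False
    then have "(1 / norm x) *\<^sub>R x \<in> sphere 0 1" by simp
    then have "N x0 \<le> N ((1 / norm x) *\<^sub>R x)" using mn by blast
    also have "\<dots> = N x / norm x" using hom by simp
    finally show ?thesis using False by (simp add: field_simps)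
  qed
  then show ?thesis using pos by blast
qed

lemma final_arith:
  fixes \<delta> K \<sigma> :: real and D :: "real \<Rightarrow> real"
  assumes d: "\<delta> \<ge> 0" and K: "K \<ge> 0" and s: "\<sigma> > 0"
    and bnd: "\<And>\<alpha>. \<alpha> \<ge> 0 \<Longrightarrow> D \<alpha> \<ge> \<alpha> * \<delta> - \<alpha>^2 / 2 * K - \<sigma> * \<alpha>^3 / 6"
    and opt: "\<And>\<alpha>. \<alpha> \<ge> 0 \<Longrightarrow> D \<alpha>C \<ge> D \<alpha>"
  shows "D \<alpha>C \<ge> (1/2) * min (\<delta>^2 / (1 + 3/2 * K)) (\<delta> powr (3/2) / (3 * sqrt \<sigma>))"
proof -
  define a where "a = min (\<delta> / (1 + 3/2 * K)) (sqrt (\<delta> / \<sigma>))"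
  have a0: "a \<ge> 0" unfolding a_def using d K s by simp
  have "a * K \<le> \<delta> / (1 + 3/2 * K) * K" unfolding a_def using K by (intro mult_right_mono) auto
  also have "\<dots> \<le> 2/3 * \<delta>" using d K by (simp add: field_simps)
  finally have aK: "a * K \<le> 2/3 * \<delta>" .
  have "a^2 \<le> (sqrt (\<delta> / \<sigma>))^2" unfolding a_def using a0 a_def by (intro power_mono) auto
  also have "\<dots> = \<delta> / \<sigma>" using d s by simp
  finally have "\<sigma> * a^2 \<le> \<delta>" using s by (simp add: field_simps)
  then have key: "a * K / 2 + \<sigma> * a^2 / 6 \<le> \<delta> / 2" using aK by linarith
  have "a * \<delta> - a^2 / 2 * K - \<sigma> * a^3 / 6 = a * (\<delta> - (a * K / 2 + \<sigma> * a^2 / 6))"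
    by (simp add: algebra_simps power2_eq_square power3_eq_cube)
  also have "\<dots> \<ge> a * (\<delta> / 2)" using key a0 by (intro mult_left_mono) auto
  finally have "D a \<ge> a * \<delta> / 2" using bnd[OF a0] by linarith
  then have Da: "D \<alpha>C \<ge> a * \<delta> / 2" using opt[OF a0] by linarith
  have "a * \<delta> = min (\<delta>^2 / (1 + 3/2 * K)) (\<delta> * sqrt (\<delta> / \<sigma>))"
    unfolding a_def using d by (simp add: min_mult_distrib_left power2_eq_square mult.commute)
  moreover have "\<delta> * sqrt (\<delta> / \<sigma>) = \<delta> powr (3/2) / sqrt \<sigma>"
  proof -
    have "\<delta> powr (3/2) = \<delta> * sqrt \<delta>"
    proof (cases "\<delta> = 0")
      case False
      then have "\<delta> powr (3/2) = \<delta> powr (1 + 1/2)" by simp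
      also have "\<dots> = \<delta> powr 1 * \<delta> powr (1/2)" by (rule powr_add)
      also have "\<dots> = \<delta> * sqrt \<delta>" using d False by (simp add: powr_half_sqrt)
      finally show ?thesis .
    qed simp
    then show ?thesis by (simp add: real_sqrt_divide)
  qed
  moreover have "\<delta> powr (3/2) / sqrt \<sigma> \<ge> \<delta> powr (3/2) / (3 * sqrt \<sigma>)"
    using s by (simp add: divide_left_mono frac_le)
  ultimately have "a * \<delta> \<ge> min (\<delta>^2 / (1 + 3/2 * K)) (\<delta> powr (3/2) / (3 * sqrt \<sigma>))"
    by linarith
  then show ?thesis using Da by linarith
qed

theorem lemma5p2:
  fixes N :: "real^'n \<Rightarrow> real"
    and f0 :: real and g :: "real^'n" and H :: "real^'n^'n" and \<sigma> :: real
    and s_k d_k :: "real^'n" and \<alpha>C :: real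
  defines "m \<equiv> cubic_model N f0 g H \<sigma>"
  defines "g_k \<equiv> g + H *v s_k"
  assumes norm: "is_norm N"
    and sym: "transpose H = H"
    and sigma_pos: "\<sigma> > 0"
    and descent: "m s_k \<le> m 0"
    and gk_large: "dual_norm N g_k \<ge> (1/2) * \<sigma> * (N s_k)^2"
    and d_unit: "N d_k = 1"
    and d_min: "\<And>v. N v = 1 \<Longrightarrow> g_k \<bullet> d_k \<le> g_k \<bullet> v"
    and alpha_nonneg: "\<alpha>C \<ge> 0"
    and alpha_min: "\<And>\<alpha>. \<alpha> \<ge> 0 \<Longrightarrow> m (s_k + \<alpha>C *\<^sub>R d_k) \<le> m (s_k + \<alpha> *\<^sub>R d_k)"
  shows "m s_k - m (s_k + \<alpha>C *\<^sub>R d_k) \<ge>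
    (1/2) * min
      (\<bar>dual_norm N g_k - (1/2) * \<sigma> * (N s_k)^2\<bar>^2
         / (1 + (3/2) * (mat_norm2 N H + \<sigma> * N s_k)))
      (\<bar>dual_norm N g_k - (1/2) * \<sigma> * (N s_k)^2\<bar> powr (3/2)
         / (3 * sqrt \<sigma>))"
proof -
  have nn: "\<forall>x. 0 \<le> N x" and hom: "\<forall>c x. N (c *\<^sub>R x) = \<bar>c\<bar> * N x"
    and tri: "\<forall>x y. N (x + y) \<le> N x + N y"
    using norm unfolding is_norm_def by blast+
  have symm: "(H *v x) \<bullet> y = (H *v y) \<bullet> x" for x y
  proof -
    have "(H *v x) \<bullet> y = (x v* transpose H) \<bullet> y" by simp
    also have "\<dots> = x \<bullet> (transpose H *v y)" by (rule dot_lmul_matrix)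
    also have "\<dots> = (H *v y) \<bullet> x" using sym by (simp add: inner_commute)
    finally show ?thesis .
  qed
  have gd_nonpos: "g_k \<bullet> d_k \<le> 0"
  proof -
    have "N (-d_k) = 1" using hom[rule_format, of "-1" d_k] d_unit by simp
    from d_min[OF this] show ?thesis by simp
  qed
  have dual: "dual_norm N g_k = - (g_k \<bullet> d_k)"
    unfolding dual_norm_def
  proof (rule cSup_eq_maximum)
    show "- (g_k \<bullet> d_k) \<in> {\<bar>g_k \<bullet> s\<bar> |s. N s = 1}"
      using d_unit gd_nonpos by (intro CollectI exI[of _ d_k]) auto
  next
    fix x assume "x \<in> {\<bar>g_k \<bullet> s\<bar> |s. N s = 1}"
    then obtain s where x: "x = \<bar>g_k \<bullet> s\<bar>" and s: "N s = 1" by blast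
    have "N (-s) = 1" using hom[rule_format, of "-1" s] s by simp
    from d_min[OF this] d_min[OF s] show "x \<le> - (g_k \<bullet> d_k)" unfolding x by simp
  qed
  obtain c where c: "c > 0" "\<forall>x. c * norm x \<le> N x" using norm_lower[OF norm] by blast
  obtain B where B: "B > 0" "\<forall>x. norm (H *v x) \<le> norm x * B"
    using bounded_linear.pos_bounded[OF matrix_vector_mul_bounded_linear[of H]] by blast
  have bdd: "bdd_above {\<bar>(H *v v) \<bullet> v\<bar> | v. N v = 1}"
  proof (rule bdd_aboveI[where M = "B / c^2"])
    fix x assume "x \<in> {\<bar>(H *v v) \<bullet> v\<bar> | v. N v = 1}"
    then obtain v where x: "x = \<bar>(H *v v) \<bullet> v\<bar>" and v: "N v = 1" by blast
    have nv: "norm v \<le> 1 / c" using c v by (simp add: field_simps) (metis mult.commute)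
    have "x \<le> norm (H *v v) * norm v" unfolding x by (rule Cauchy_Schwarz_ineq2)
    also have "\<dots> \<le> (norm v * B) * norm v" using B by (intro mult_right_mono) auto
    also have "\<dots> = B * (norm v)^2" by (simp add: power2_eq_square)
    also have "\<dots> \<le> B * (1/c)^2" using B nv by (intro mult_left_mono power_mono) auto
    finally show "x \<le> B / c^2" by (simp add: power_divide)
  qed
  have hd: "\<bar>(H *v d_k) \<bullet> d_k\<bar> \<le> mat_norm2 N H"
    unfolding mat_norm2_def using d_unit by (intro cSup_upper[OF _ bdd]) blast
  define h where "h = (H *v d_k) \<bullet> d_k"
  define \<nu> where "\<nu> = N s_k"
  define K where "K = mat_norm2 N H + \<sigma> * \<nu>"
  define \<delta> where "\<delta> = dual_norm N g_k - (1/2) * \<sigma> * \<nu>^2"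
  have nu0: "\<nu> \<ge> 0" unfolding \<nu>_def using nn by blast
  have K0: "K \<ge> 0" unfolding K_def using hd nu0 sigma_pos by (smt (verit) mult_nonneg_nonneg)
  have hK: "h + \<sigma> * \<nu> \<le> K" unfolding K_def h_def using hd by linarith
  have d0: "\<delta> \<ge> 0" unfolding \<delta>_def \<nu>_def using gk_large by linarith
  have expand: "m (s_k + \<alpha> *\<^sub>R d_k) = m s_k + \<alpha> * (g_k \<bullet> d_k) + \<alpha>^2/2 * h
       + \<sigma>/6 * (N (s_k + \<alpha> *\<^sub>R d_k)^3 - \<nu>^3)" for \<alpha>
  proof -
    have e1: "(H *v (s_k + \<alpha> *\<^sub>R d_k)) \<bullet> (s_k + \<alpha> *\<^sub>R d_k)
       = (H *v s_k) \<bullet> s_k + 2 * \<alpha> * ((H *v s_k) \<bullet> d_k) + \<alpha>^2 * h"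
      using symm[of d_k s_k] unfolding h_def
      by (simp add: matrix_vector_right_distrib matrix_vector_mult_scaleR inner_add_left inner_add_right
          algebra_simps power2_eq_square)
    show ?thesis unfolding m_def cubic_model_def e1 g_k_def \<nu>_def
      by (simp add: inner_add_left inner_add_right algebra_simps power2_eq_square)
  qed
  have bnd: "m s_k - m (s_k + \<alpha> *\<^sub>R d_k) \<ge> \<alpha> * \<delta> - \<alpha>^2 / 2 * K - \<sigma> * \<alpha>^3 / 6"
    if a0: "\<alpha> \<ge> 0" for \<alpha>
  proof -
    have "N (s_k + \<alpha> *\<^sub>R d_k) \<le> \<nu> + \<alpha>"
      using tri[rule_format, of s_k "\<alpha> *\<^sub>R d_k"] hom d_unit a0 unfolding \<nu>_def by simp
    then have "N (s_k + \<alpha> *\<^sub>R d_k)^3 \<le> (\<nu> + \<alpha>)^3" using nn by (intro power_mono) auto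
    then have c3: "\<sigma>/6 * (N (s_k + \<alpha> *\<^sub>R d_k)^3 - \<nu>^3) \<le> \<sigma>/6 * ((\<nu> + \<alpha>)^3 - \<nu>^3)"
      using sigma_pos by (intro mult_left_mono) auto
    have h2: "\<alpha>^2/2 * (h + \<sigma> * \<nu>) \<le> \<alpha>^2/2 * K" using hK by (intro mult_left_mono) auto
    have id: "\<alpha> * (g_k \<bullet> d_k) + \<alpha>^2/2 * h + \<sigma>/6 * ((\<nu> + \<alpha>)^3 - \<nu>^3)
       = - \<alpha> * \<delta> + \<alpha>^2/2 * (h + \<sigma> * \<nu>) + \<sigma> * \<alpha>^3 / 6"
      unfolding \<delta>_def dual by (simp add: algebra_simps power2_eq_square power3_eq_cube)
    show ?thesis using expand[of \<alpha>] c3 h2 id by linarith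
  qed
  have "m s_k - m (s_k + \<alpha>C *\<^sub>R d_k) \<ge> (1/2) * min (\<delta>^2 / (1 + 3/2 * K)) (\<delta> powr (3/2) / (3 * sqrt \<sigma>))"
    by (rule final_arith[where D = "\<lambda>\<alpha>. m s_k - m (s_k + \<alpha> *\<^sub>R d_k)", OF d0 K0 sigma_pos bnd])
       (use alpha_min in auto)
  then show ?thesis using d0 unfolding \<delta>_def K_def \<nu>_def by simp
qed

end
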